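(* Let $c=\min_{x\in\partial D}\phi(x;p,p')$, assume $0<\eta'<\inf_{\omega\in S^2}s(\omega;p,p',c)$, and fix $0<s<\eta'$. For $\omega\in S^2$: (i) if $p'+s(\omega;p,p',c)\omega\in\partial D$, then $\min_{x\in\partial D}\phi(x;p,p'+s\omega)=c-s$; (ii) if $p'+s(\omega;p,p',c)\omega\notin\partial D$, then $\min_{x\in\partial D}\phi(x;p,p'+s\omega)>c-s$. Consequently $$\Lambda_{\partial D}(p,p')=\{p'+s(\omega;p,p',c)\omega:\ \omega\in S^2,\ \min_{x\in\partial D}\phi(x;p,p'+s\omega)=c-s\}.$$
   Context: Let $D\subset\mathbb R^3$ be a nonempty bounded open set with $C^2$ boundary; $p,p'\in\mathbb R^3\setminus\overline D$ with $[p,p']\cap\overline D=\emptyset$ (so $c>|p-p'|$); $B'$ is the open ball with center $p'$ and radius $\eta'$, $\overline{B'}\cap\overline D=\emptyset$. $\phi(x;y,y')=|y-x|+|x-y'|$; $E_c(p,p')=\{x:\phi(x;p,p')=c\}$; $\Lambda_{\partial D}(p,p')=\{q\in\partial D:\phi(q;p,p')=c\}$. For $\omega\in S^2$, $s(\omega;p,p',c)=\dfrac{c^2-|p-p'|^2}{2\{c-\omega\cdot(p-p')\}}$, so that $p'+s(\omega;p,p',c)\omega$ is the unique point of $E_c(p,p')$ on the ray $\{p'+t\omega:t>0\}$. *)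

theory Defs
  imports "HOL-Analysis.Analysis"
begin

type_synonym R3 = "real ^ 3"

definition phi :: "R3 \<Rightarrow> R3 \<Rightarrow> R3 \<Rightarrow> real" where
  "phi x y y' = dist y x + dist x y'"

definition ellipsoid :: "real \<Rightarrow> R3 \<Rightarrow> R3 \<Rightarrow> R3 set" where
  "ellipsoid c p p' = {x. phi x p p' = c}"

definition Lambda :: "R3 set \<Rightarrow> real \<Rightarrow> R3 \<Rightarrow> R3 \<Rightarrow> R3 set" where
  "Lambda D c p p' = {q \<in> frontier D. phi q p p' = c}"

definition sfun :: "R3 \<Rightarrow> R3 \<Rightarrow> R3 \<Rightarrow> real \<Rightarrow> real" where
  "sfun \<omega> p p' c = (c\<^sup>2 - (norm (p - p'))\<^sup>2) / (2 * (c - \<omega> \<bullet> (p - p')))"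

text \<open>min over the boundary of phi(x; y, y') (the minimum is attained since the
  boundary is compact; we write it as an infimum).\<close>
definition min_phi :: "R3 set \<Rightarrow> R3 \<Rightarrow> R3 \<Rightarrow> real" where
  "min_phi D y y' = Inf ((\<lambda>x. phi x y y') ` frontier D)"

definition C2_boundary :: "R3 set \<Rightarrow> bool" where
  "C2_boundary D \<longleftrightarrow>
     (\<forall>q \<in> frontier D. \<exists>U \<rho> g H.
        open U \<and> q \<in> U \<and>
        (\<forall>x \<in> U. (\<rho> has_derivative (\<lambda>h. g x \<bullet> h)) (at x)) \<and>
        (\<forall>x \<in> U. (g has_derivative H x) (at x)) \<and>
        (\<forall>v. continuous_on U (\<lambda>x. H x v)) \<and>
        (\<forall>x \<in> U. g x \<noteq> 0) \<and>
        D \<inter> U = {x \<in> U. \<rho> x < 0})"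

end

theory Submission
  imports Defs
begin

lemma minphi_attained:
  fixes D :: "R3 set"
  assumes "D \<noteq> {}" "bounded D" "open D"
  shows "\<exists>x\<in>frontier D. min_phi D y y' = phi x y y' \<and> (\<forall>z\<in>frontier D. phi x y y' \<le> phi z y y')"
proof -
  have cpt: "compact (frontier D)" using assms(2) by (simp add: compact_frontier_bounded)
  have "D \<noteq> UNIV" using assms(2) not_bounded_UNIV by blast
  hence ne: "frontier D \<noteq> {}" using assms(1) frontier_eq_empty by blast
  have cont: "continuous_on (frontier D) (\<lambda>x. phi x y y')"
    unfolding phi_def by (intro continuous_intros)
  obtain x where x: "x \<in> frontier D" "\<forall>z\<in>frontier D. phi x y y' \<le> phi z y y'"
    using continuous_attains_inf[OF cpt ne cont] by blast
  have "min_phi D y y' = phi x y y'" unfolding min_phi_def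
    by (rule cInf_eq_minimum) (use x in auto)
  thus ?thesis using x by blast
qed

lemma sq_eq_helper:
  fixes A B :: real
  assumes "A \<ge> 0" "B \<ge> 0" "A^2 = B^2" shows "A = B"
  using assms by (metis power2_eq_iff_nonneg)

lemma norm_expand0:
  fixes v w :: R3 and t :: real
  assumes "norm w = 1"
  shows "(norm (v - t *\<^sub>R w))^2 = (norm v)^2 - 2 * t * (w \<bullet> v) + t^2"
proof -
  have "(norm (v - t *\<^sub>R w))^2 = (v - t *\<^sub>R w) \<bullet> (v - t *\<^sub>R w)" by (rule power2_norm_eq_inner)
  also have "\<dots> = v \<bullet> v - 2 * t * (w \<bullet> v) + t^2 * (w \<bullet> w)"
    by (simp add: inner_diff_left inner_diff_right inner_commute algebra_simps power2_eq_square)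
  also have "\<dots> = (norm v)^2 - 2 * t * (w \<bullet> v) + t^2 * (norm w)^2"
    by (simp only: power2_norm_eq_inner)
  finally show ?thesis using assms by simp
qed

lemma norm_expand:
  fixes p p' w :: R3 and t :: real
  assumes "norm w = 1"
  shows "(norm (p - (p' + t *\<^sub>R w)))^2 = (norm (p - p'))^2 - 2 * t * (w \<bullet> (p - p')) + t^2"
proof -
  have e: "p - (p' + t *\<^sub>R w) = (p - p') - t *\<^sub>R w" by (simp add: algebra_simps)
  show ?thesis unfolding e by (rule norm_expand0[OF assms])
qed

theorem proposition5p1:
  fixes D :: "R3 set" and p p' :: R3 and \<eta>' s c :: real
  assumes D_ne: "D \<noteq> {}" and D_bdd: "bounded D" and D_open: "open D"
    and D_C2: "C2_boundary D"
    and seg: "closed_segment p p' \<inter> closure D = {}"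
    and ball: "closure (ball p' \<eta>') \<inter> closure D = {}"
    and c_def: "c = min_phi D p p'"
    and eta_pos: "0 < \<eta>'"
    and eta_lt: "\<eta>' < (INF \<omega>\<in>sphere 0 1. sfun \<omega> p p' c)"
    and s_pos: "0 < s" and s_lt: "s < \<eta>'"
  shows "(\<forall>\<omega> \<in> sphere 0 1.
            (p' + sfun \<omega> p p' c *\<^sub>R \<omega> \<in> frontier D
               \<longrightarrow> min_phi D p (p' + s *\<^sub>R \<omega>) = c - s) \<and>
            (p' + sfun \<omega> p p' c *\<^sub>R \<omega> \<notin> frontier D
               \<longrightarrow> min_phi D p (p' + s *\<^sub>R \<omega>) > c - s))
       \<and> Lambda D c p p' =
           {p' + sfun \<omega> p p' c *\<^sub>R \<omega> | \<omega>.
              \<omega> \<in> sphere 0 1 \<and> min_phi D p (p' + s *\<^sub>R \<omega>) = c - s}"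
proof -
  define d where "d = norm (p - p')"
  have frc: "frontier D \<subseteq> closure D" by (simp add: frontier_def)
  obtain q0 where q0: "q0 \<in> frontier D" "c = phi q0 p p'"
    and cmin: "\<forall>z\<in>frontier D. c \<le> phi z p p'"
    using minphi_attained[OF D_ne D_bdd D_open, of p p'] c_def by auto
  have "q0 \<notin> closed_segment p p'" using seg q0(1) frc by blast
  hence "dist p p' \<noteq> dist p q0 + dist q0 p'"
    using between between_mem_segment by blast
  hence dc: "d < c" using q0(2) dist_triangle[of p p' q0] unfolding phi_def d_def dist_norm
    by (smt (verit) dist_commute dist_norm)
  have d0: "0 \<le> d" unfolding d_def by simp
  have p'_nf: "\<And>x. x \<in> frontier D \<Longrightarrow> x \<noteq> p'" using seg frc by auto
  have a_le: "w \<bullet> (p - p') \<le> d" if "norm w = 1" for w :: R3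
    using norm_cauchy_schwarz[of w "p - p'"] that unfolding d_def by simp
  have den: "c - w \<bullet> (p - p') > 0" if "norm w = 1" for w :: R3
    using a_le[OF that] dc by simp
  have sf_pos: "sfun w p p' c > 0" if "norm w = 1" for w :: R3
  proof -
    have "d^2 < c^2" using dc d0 by (intro power_strict_mono) auto
    hence "c^2 - d^2 > 0" by simp
    thus ?thesis unfolding sfun_def d_def[symmetric] using den[OF that] by simp
  qed
  have sf_eq: "2 * sfun w p p' c * (c - w \<bullet> (p - p')) = c^2 - d^2" if "norm w = 1" for w :: R3
    using den[OF that] unfolding sfun_def d_def by (simp add: field_simps)
  have uniq: "t = sfun w p p' c" if "norm w = 1" "t \<ge> 0" "phi (p' + t *\<^sub>R w) p p' = c" for w :: R3 and t
  proof -
    let ?a = "w \<bullet> (p - p')"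
    have "dist (p' + t *\<^sub>R w) p' = t" using that by (simp add: dist_norm)
    hence "norm (p - (p' + t *\<^sub>R w)) = c - t" using that(3) unfolding phi_def by (simp add: dist_norm)
    hence "(c - t)^2 = d^2 - 2 * t * ?a + t^2" using norm_expand[OF that(1), of p p' t] d_def by simp
    hence "t * (2 * (c - ?a)) = c^2 - d^2" by (simp add: power2_eq_square algebra_simps)
    hence "t * (2 * (c - ?a)) = 2 * sfun w p p' c * (c - ?a)" using sf_eq[OF that(1)] by simp
    hence "(t - sfun w p p' c) * (c - ?a) = 0" by (simp add: algebra_simps)
    thus ?thesis using den[OF that(1)] by simp
  qed
  have onE: "phi (p' + sfun w p p' c *\<^sub>R w) p p' = c" if "norm w = 1" for w :: R3
  proof -
    let ?a = "w \<bullet> (p - p')" let ?t = "sfun w p p' c"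
    have tpos: "?t > 0" using sf_pos[OF that] .
    have e: "?t * (2 * (c - ?a)) = c^2 - d^2" using sf_eq[OF that] by (simp add: algebra_simps)
    have "(c - ?t) * (2 * (c - ?a)) = c^2 - 2*c*?a + d^2" using e by (simp add: algebra_simps power2_eq_square)
    also have "\<dots> \<ge> (c - d)^2"
    proof -
      have "c * ?a \<le> c * d" using a_le[OF that] dc d0 by (intro mult_left_mono) auto
      thus ?thesis by (simp add: power2_eq_square algebra_simps)
    qed
    finally have "(c - ?t) * (2 * (c - ?a)) \<ge> 0" by (smt (verit) zero_le_power2)
    hence ct: "c - ?t \<ge> 0" using den[OF that] by (simp add: zero_le_mult_iff)
    have "(norm (p - (p' + ?t *\<^sub>R w)))^2 = d^2 - 2 * ?t * ?a + ?t^2"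
      using norm_expand[OF that, of p p' ?t] d_def by simp
    also have "\<dots> = (c - ?t)^2" using e by (simp add: power2_eq_square algebra_simps)
    finally have "norm (p - (p' + ?t *\<^sub>R w)) = c - ?t" using ct sq_eq_helper by auto
    moreover have "dist (p' + ?t *\<^sub>R w) p' = ?t" using that tpos by (simp add: dist_norm)
    ultimately show ?thesis unfolding phi_def by (simp add: dist_norm)
  qed
  have bdd: "bdd_below ((\<lambda>w. sfun w p p' c) ` sphere 0 1)"
    by (rule bdd_belowI[of _ 0]) (use sf_pos in \<open>auto intro: less_imp_le\<close>)
  have s_lt_sf: "s < sfun w p p' c" if "norm w = 1" for w :: R3
  proof -
    have "(INF \<omega>\<in>sphere 0 1. sfun \<omega> p p' c) \<le> sfun w p p' c"
      by (rule cINF_lower[OF bdd]) (use that in simp)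
    thus ?thesis using eta_lt s_lt by simp
  qed
  have lowb: "phi x p (p' + s *\<^sub>R w) \<ge> c - s" if "norm w = 1" "x \<in> frontier D" for w :: R3 and x
  proof -
    have "dist x p' \<le> dist x (p' + s *\<^sub>R w) + dist (p' + s *\<^sub>R w) p'" by (rule dist_triangle)
    moreover have "dist (p' + s *\<^sub>R w) p' = s" using that s_pos by (simp add: dist_norm)
    ultimately show ?thesis using cmin that(2) unfolding phi_def by force
  qed
  have partI: "min_phi D p (p' + s *\<^sub>R w) = c - s"
    if w: "norm w = 1" and inF: "p' + sfun w p p' c *\<^sub>R w \<in> frontier D" for w :: R3
  proof -
    let ?t = "sfun w p p' c" let ?P = "p' + ?t *\<^sub>R w"
    have "dist ?P (p' + s *\<^sub>R w) = norm ((?t - s) *\<^sub>R w)" by (simp add: dist_norm algebra_simps)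
    also have "\<dots> = ?t - s" using s_lt_sf[OF w] w by simp
    finally have d1: "dist ?P (p' + s *\<^sub>R w) = ?t - s" .
    have d2: "dist ?P p' = ?t" using sf_pos[OF w] w by (simp add: dist_norm)
    have P: "phi ?P p (p' + s *\<^sub>R w) = c - s" using onE[OF w] d1 d2 unfolding phi_def by simp
    have mem: "c - s \<in> (\<lambda>x. phi x p (p' + s *\<^sub>R w)) ` frontier D"
      using P inF by (metis image_eqI)
    show ?thesis unfolding min_phi_def
      by (intro cInf_eq_minimum[OF mem]) (use lowb[OF w] in auto)
  qed
  have partII: "min_phi D p (p' + s *\<^sub>R w) > c - s"
    if w: "norm w = 1" and nF: "p' + sfun w p p' c *\<^sub>R w \<notin> frontier D" for w :: R3
  proof -
    obtain x where x: "x \<in> frontier D" "min_phi D p (p' + s *\<^sub>R w) = phi x p (p' + s *\<^sub>R w)"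
      using minphi_attained[OF D_ne D_bdd D_open, of p "p' + s *\<^sub>R w"] by auto
    have ge: "phi x p (p' + s *\<^sub>R w) \<ge> c - s" using lowb[OF w x(1)] .
    show ?thesis
    proof (rule ccontr)
      assume "\<not> ?thesis"
      hence eq: "phi x p (p' + s *\<^sub>R w) = c - s" using ge x(2) by simp
      let ?ps = "p' + s *\<^sub>R w"
      have tri: "dist x p' \<le> dist x ?ps + dist ?ps p'" by (rule dist_triangle)
      have dps: "dist ?ps p' = s" using w s_pos by (simp add: dist_norm)
      have "c \<le> phi x p p'" using cmin x(1) by blast
      hence E1: "dist x p' = dist x ?ps + dist ?ps p'" and E2: "phi x p p' = c"
        using eq tri dps unfolding phi_def by auto
      define A where "A = x - ?ps"
      have "norm (A + s *\<^sub>R w) = norm A + norm (s *\<^sub>R w)"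
        using E1 dps unfolding A_def dist_norm by (simp add: algebra_simps)
      hence "norm A *\<^sub>R (s *\<^sub>R w) = norm (s *\<^sub>R w) *\<^sub>R A" using norm_triangle_eq by blast
      hence "s *\<^sub>R (norm A *\<^sub>R w) = s *\<^sub>R A" using w s_pos by (simp add: mult.commute)
      hence Aw: "A = norm A *\<^sub>R w" using s_pos by (metis scaleR_cancel_left less_irrefl)
      have xeq: "x = p' + (norm A + s) *\<^sub>R w"
        using Aw unfolding A_def by (metis (no_types, lifting) add.commute add.left_commute diff_add_cancel scaleR_left_distrib)
      have "norm A + s = sfun w p p' c"
        by (rule uniq[OF w]) (use s_pos E2 xeq in auto)
      thus False using xeq nF x(1) by simp
    qed
  qed
  have P1: "\<forall>\<omega> \<in> sphere 0 1.
            (p' + sfun \<omega> p p' c *\<^sub>R \<omega> \<in> frontier D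
               \<longrightarrow> min_phi D p (p' + s *\<^sub>R \<omega>) = c - s) \<and>
            (p' + sfun \<omega> p p' c *\<^sub>R \<omega> \<notin> frontier D
               \<longrightarrow> min_phi D p (p' + s *\<^sub>R \<omega>) > c - s)"
    using partI partII by auto
  have P2: "Lambda D c p p' =
           {p' + sfun \<omega> p p' c *\<^sub>R \<omega> | \<omega>.
              \<omega> \<in> sphere 0 1 \<and> min_phi D p (p' + s *\<^sub>R \<omega>) = c - s}"
  proof (intro set_eqI iffI)
    fix q assume "q \<in> Lambda D c p p'"
    hence q: "q \<in> frontier D" "phi q p p' = c" unfolding Lambda_def by auto
    define r where "r = norm (q - p')"
    have rpos: "r > 0" using p'_nf[OF q(1)] unfolding r_def by simp
    define w where "w = (1 / r) *\<^sub>R (q - p')"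
    have w1: "norm w = 1" using rpos unfolding w_def r_def by simp
    have qeq: "q = p' + r *\<^sub>R w" using rpos unfolding w_def by simp
    have "r = sfun w p p' c" by (rule uniq[OF w1]) (use rpos q(2) qeq in auto)
    hence qe: "q = p' + sfun w p p' c *\<^sub>R w" using qeq by simp
    have "min_phi D p (p' + s *\<^sub>R w) = c - s" using partI[OF w1] qe q(1) by simp
    thus "q \<in> {p' + sfun \<omega> p p' c *\<^sub>R \<omega> | \<omega>.
              \<omega> \<in> sphere 0 1 \<and> min_phi D p (p' + s *\<^sub>R \<omega>) = c - s}"
      using qe w1 by auto
  next
    fix q assume "q \<in> {p' + sfun \<omega> p p' c *\<^sub>R \<omega> | \<omega>.
              \<omega> \<in> sphere 0 1 \<and> min_phi D p (p' + s *\<^sub>R \<omega>) = c - s}"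
    then obtain w where w: "norm w = 1" "q = p' + sfun w p p' c *\<^sub>R w"
      "min_phi D p (p' + s *\<^sub>R w) = c - s" by auto
    have "q \<in> frontier D" using partII[OF w(1)] w by force
    thus "q \<in> Lambda D c p p'" unfolding Lambda_def using onE[OF w(1)] w(2) by simp
  qed
  show ?thesis using P1 P2 by blast
qed

end
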